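(* Let $G$ be a finite graph with $\chi_c(G)=\frac{n}{d}$ where $\gcd(n,d)=1$. If $d\ge 2$ (equivalently, $\chi_c(G)\neq\chi(G)$), then $\phi(G)\le \left\lceil \chi_c(G)\left(1+\frac{1}{d-1}\right)\right\rceil\le 2\chi(G)-1$.
   Context: For integers $n\ge 2d\ge 2$, the circular complete graph $K_{n/d}$ has vertex set $\{0,1,\dots,n-1\}$, with $i$ adjacent to $j$ iff $d\le |i-j|\le n-d$. The circular chromatic number $\chi_c(G)$ is the minimum of $n/d$ (with $\gcd(n,d)=1$) such that $G$ admits a homomorphism to $K_{n/d}$; $\chi(G)$ is the chromatic number. An independent set of $G$ is a free independent set if it is contained in at least two distinct maximal independent sets of $G$. The free chromatic number $\phi(G)$ is the minimum positive integer $t$ such that $V(G)$ can be partitioned into $t$ free independent sets of $G$ ($\phi(G)=\infty$ if no such partition exists). *)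

theory Defs
  imports Complex_Main "HOL-Library.Extended_Nat" "HOL-Library.Disjoint_Sets"
begin

definition fin_graph :: "'a set \<Rightarrow> ('a \<Rightarrow> 'a \<Rightarrow> bool) \<Rightarrow> bool" where
  "fin_graph V E \<longleftrightarrow> finite V \<and> (\<forall>u v. E u v \<longrightarrow> u \<in> V \<and> v \<in> V \<and> u \<noteq> v \<and> E v u)"

text \<open>Homomorphism into the circular complete graph K_{n/d} on {0..n-1}:
  i adjacent to j iff d \<le> |i-j| \<le> n-d.\<close>
definition circ_hom :: "'a set \<Rightarrow> ('a \<Rightarrow> 'a \<Rightarrow> bool) \<Rightarrow> nat \<Rightarrow> nat \<Rightarrow> ('a \<Rightarrow> nat) \<Rightarrow> bool" where
  "circ_hom V E n d f \<longleftrightarrow> (\<forall>v\<in>V. f v < n) \<and>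
     (\<forall>u v. E u v \<longrightarrow> int d \<le> \<bar>int (f u) - int (f v)\<bar> \<and> \<bar>int (f u) - int (f v)\<bar> \<le> int n - int d)"

definition circular_chromatic_number :: "'a set \<Rightarrow> ('a \<Rightarrow> 'a \<Rightarrow> bool) \<Rightarrow> real" where
  "circular_chromatic_number V E =
     Inf {real n / real d | n d. 1 \<le> d \<and> 2 * d \<le> n \<and> coprime n d \<and> (\<exists>f. circ_hom V E n d f)}"

definition proper_coloring :: "'a set \<Rightarrow> ('a \<Rightarrow> 'a \<Rightarrow> bool) \<Rightarrow> nat \<Rightarrow> ('a \<Rightarrow> nat) \<Rightarrow> bool" where
  "proper_coloring V E k c \<longleftrightarrow> (\<forall>v\<in>V. c v < k) \<and> (\<forall>u v. E u v \<longrightarrow> c u \<noteq> c v)"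

definition chromatic_number :: "'a set \<Rightarrow> ('a \<Rightarrow> 'a \<Rightarrow> bool) \<Rightarrow> nat" where
  "chromatic_number V E = (LEAST k. \<exists>c. proper_coloring V E k c)"

definition independent_set :: "'a set \<Rightarrow> ('a \<Rightarrow> 'a \<Rightarrow> bool) \<Rightarrow> 'a set \<Rightarrow> bool" where
  "independent_set V E S \<longleftrightarrow> S \<subseteq> V \<and> (\<forall>u\<in>S. \<forall>v\<in>S. \<not> E u v)"

definition maximal_independent_set :: "'a set \<Rightarrow> ('a \<Rightarrow> 'a \<Rightarrow> bool) \<Rightarrow> 'a set \<Rightarrow> bool" where
  "maximal_independent_set V E S \<longleftrightarrow> independent_set V E S \<and>
     (\<forall>T. independent_set V E T \<and> S \<subseteq> T \<longrightarrow> T = S)"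

definition free_independent_set :: "'a set \<Rightarrow> ('a \<Rightarrow> 'a \<Rightarrow> bool) \<Rightarrow> 'a set \<Rightarrow> bool" where
  "free_independent_set V E S \<longleftrightarrow> independent_set V E S \<and>
     (\<exists>M1 M2. M1 \<noteq> M2 \<and> maximal_independent_set V E M1 \<and> maximal_independent_set V E M2
        \<and> S \<subseteq> M1 \<and> S \<subseteq> M2)"

text \<open>Free chromatic number: least positive t such that V is partitioned into t free
  independent sets; \<infinity> if none (Inf of the empty set of enat is \<infinity>).\<close>
definition free_chromatic_number :: "'a set \<Rightarrow> ('a \<Rightarrow> 'a \<Rightarrow> bool) \<Rightarrow> enat" where
  "free_chromatic_number V E =
     Inf {enat (card P) | P. partition_on V P \<and> finite P \<and> 0 < card P \<and>
                            (\<forall>S\<in>P. free_independent_set V E S)}"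

end

theory Submission
  imports Defs
begin


definition cadj :: "nat \<Rightarrow> nat \<Rightarrow> nat \<Rightarrow> nat \<Rightarrow> bool" where
  "cadj n d x y \<longleftrightarrow> int d \<le> \<bar>int x - int y\<bar> \<and> \<bar>int x - int y\<bar> \<le> int n - int d"

lemma cadj_mod:
  assumes "x < n" "y < n" "0 < d"
  shows "cadj n d x y \<longleftrightarrow> int d \<le> (int x - int y) mod int n \<and> (int x - int y) mod int n \<le> int n - int d"
proof (cases "y \<le> x")
  case True
  then have e: "(int x - int y) mod int n = int x - int y" using assms by (intro mod_pos_pos_trivial) auto
  have "\<bar>int x - int y\<bar> = int x - int y" using True by simp
  then show ?thesis unfolding cadj_def e by simp
next
  case False
  have "(int x - int y) mod int n = (int x - int y + int n) mod int n" by simp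
  also have "\<dots> = int x - int y + int n" using False assms by (intro mod_pos_pos_trivial) auto
  finally have e: "(int x - int y) mod int n = int x - int y + int n" .
  have "\<bar>int x - int y\<bar> = int y - int x" using False by simp
  then show ?thesis unfolding cadj_def e by auto
qed



lemma cadj_rot:
  assumes "x < n" "y < n" "0 < d" "cadj n d x y"
  shows "cadj n d ((x + s) mod n) ((y + s) mod n)"
proof -
  have n: "0 < n" using assms by simp
  have "(int ((x + s) mod n) - int ((y + s) mod n)) mod int n
      = (int (x + s) - int (y + s)) mod int n"
    by (simp add: of_nat_mod mod_diff_eq)
  also have "\<dots> = (int x - int y) mod int n" by simp
  finally have "(int ((x + s) mod n) - int ((y + s) mod n)) mod int n = (int x - int y) mod int n" .
  then show ?thesis using assms n by (simp add: cadj_mod)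
qed

lemma div_ge_add:
  fixes a b k q :: int
  assumes "0 < q" "a \<ge> b + k * q"
  shows "a div q \<ge> b div q + k"
proof -
  have "(b + k * q) div q = b div q + k" using assms by simp
  moreover have "(b + k * q) div q \<le> a div q" using assms by (intro zdiv_mono1) auto
  ultimately show ?thesis by simp
qed

lemma BH_map:
  fixes P Q P' Q' X Y :: int
  assumes q: "1 \<le> Q" and q': "1 \<le> Q'" and e: "P * Q' - P' * Q = 1"
    and x: "0 \<le> X" "X \<le> P - 2" and y: "0 \<le> Y" "Y \<le> P - 2"
    and xy: "X < Y" "Q \<le> Y - X" "Y - X \<le> P - Q"
  shows "Q' \<le> ((Y+1)*Q' - 1) div Q - ((X+1)*Q' - 1) div Q
     \<and> ((Y+1)*Q' - 1) div Q - ((X+1)*Q' - 1) div Q \<le> P' - Q'"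
proof
  have "(Y+1)*Q' - 1 \<ge> ((X+1)*Q' - 1) + Q' * Q"
  proof -
    have "(Y+1)*Q' \<ge> (X+1+Q)*Q'" using xy q' by (intro mult_right_mono) auto
    then show ?thesis by (simp add: algebra_simps)
  qed
  from div_ge_add[OF _ this] q
  show "Q' \<le> ((Y+1)*Q' - 1) div Q - ((X+1)*Q' - 1) div Q" by simp
next
  define M where "M = (Y+1+Q)*Q'"
  have hx: "((X+1)*Q' - 1) div Q + P' = ((X+1+P)*Q' - 2) div Q"
  proof -
    have "(X+1+P)*Q' - 2 = ((X+1)*Q' - 1) + P' * Q" using e by (simp add: algebra_simps)
    moreover have "(((X+1)*Q' - 1) + P' * Q) div Q = P' + ((X+1)*Q' - 1) div Q"
      using q by (intro div_mult_self1) auto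
    ultimately show ?thesis by (metis add.commute)
  qed
  have hy: "((Y+1)*Q' - 1) div Q + Q' = (M - 1) div Q"
  proof -
    have "M - 1 = ((Y+1)*Q' - 1) + Q' * Q" unfolding M_def by (simp add: algebra_simps)
    moreover have "(((Y+1)*Q' - 1) + Q' * Q) div Q = Q' + ((Y+1)*Q' - 1) div Q"
      using q by (intro div_mult_self1) auto
    ultimately show ?thesis by (metis add.commute)
  qed
  have key: "(M - 1) div Q \<le> ((X+1+P)*Q' - 2) div Q"
  proof (cases "X + P \<ge> Y + Q + 1")
    case True
    have "(X+1+P)*Q' \<ge> (Y+2+Q)*Q'" using True q' by (intro mult_right_mono) auto
    then have "M - 1 \<le> (X+1+P)*Q' - 2" unfolding M_def using q' by (simp add: algebra_simps)
    then show ?thesis using q by (intro zdiv_mono1) auto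
  next
    case False
    then have xe: "X + P = Y + Q" using xy by simp
    have nd: "\<not> Q dvd (M - 1)"
    proof
      assume "Q dvd M - 1"
      then have "Q dvd (Y+1)*Q' - 1" unfolding M_def
        by (metis (no_types, lifting) dvd_add_times_triv_right_iff add_diff_eq diff_add_eq
            distrib_right mult.commute)
      moreover have "(Y + 1 - P) * Q' = ((Y+1)*Q' - 1) - P' * Q" using e by (simp add: algebra_simps)
      ultimately have "Q dvd (Y + 1 - P) * Q'" by (metis dvd_diff dvd_triv_right)
      moreover have "coprime Q Q'"
      proof (rule coprimeI)
        fix c assume "c dvd Q" "c dvd Q'"
        then have "c dvd P * Q' - P' * Q" by simp
        then show "is_unit c" using e by simp
      qed
      ultimately have "Q dvd (Y + 1 - P)" using coprime_dvd_mult_left_iff by blast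
      then have "Q dvd (P - 1 - Y)" by (metis dvd_minus_iff minus_diff_eq diff_diff_eq add.commute diff_diff_eq2)
      moreover have "0 < P - 1 - Y" "P - 1 - Y < Q" using y x xe by auto
      ultimately show False using zdvd_imp_le by fastforce
    qed
    have "(M - 1) mod Q \<noteq> 0" using nd by (simp add: dvd_eq_mod_eq_0)
    moreover have "(M - 1) mod Q \<ge> 0" using q by simp
    ultimately have "(M - 1) mod Q \<ge> 1" by linarith
    then have "Q * ((M - 1) div Q) \<le> M - 2"
      using mult_div_mod_eq[of Q "M - 1"] by linarith
    then have "(Q * ((M - 1) div Q)) div Q \<le> (M - 2) div Q" using q by (intro zdiv_mono1) auto
    then have "(M - 1) div Q \<le> (M - 2) div Q" using q by simp
    moreover have "M - 2 = (X+1+P)*Q' - 2"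
    proof -
      have "Y + 1 + Q = X + 1 + P" using xe by simp
      then show ?thesis unfolding M_def by simp
    qed
    ultimately show ?thesis by simp
  qed
  show "((Y+1)*Q' - 1) div Q - ((X+1)*Q' - 1) div Q \<le> P' - Q'"
    using hx hy key by linarith
qed



lemma farey:
  fixes p q :: nat
  assumes "coprime p q" "1 \<le> q" "2 * q < p"
  shows "\<exists>q' p'. 1 \<le> q' \<and> q' \<le> q \<and> p * q' = p' * q + 1"
proof (cases "q = 1")
  case True
  then show ?thesis using assms by (intro exI[of _ 1] exI[of _ "p - 1"]) auto
next
  case False
  then have q2: "q \<ge> 2" using assms by simp
  have "gcd (int p) (int q) = 1" using assms by (simp add: coprime_iff_gcd_eq_1 gcd_int_def)
  then obtain u v :: int where uv: "u * int p + v * int q = 1" using bezout_int[of "int p" "int q"] by auto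
  define r where "r = u mod int q"
  have r0: "0 \<le> r" "r < int q" using q2 unfolding r_def by auto
  define k where "k = u div int q"
  have k: "u = r + int q * k" unfolding r_def k_def using mult_div_mod_eq[of "int q" u] by linarith
  have e: "int p * r = 1 - int q * (v + int p * k)" using uv k by (simp add: algebra_simps)
  have "r \<noteq> 0"
  proof
    assume "r = 0"
    then have "int q * (v + int p * k) = 1" using e by simp
    then have "int q dvd 1" by (metis dvd_triv_left)
    then show False using q2 by simp
  qed
  then have r1: "r \<ge> 1" using r0 by simp
  define w where "w = - (v + int p * k)"
  have e2: "int p * r = int q * w + 1" using e unfolding w_def by (simp add: algebra_simps)
  have "w \<ge> 0"
  proof (rule ccontr)
    assume "\<not> w \<ge> 0"
    then have "w \<le> -1" by simp
    then have "int q * w \<le> int q * (-1)" using q2 by (intro mult_left_mono) auto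
    then have "int q * w \<le> - int q" by simp
    moreover have "int p * r \<ge> 0" using r1 by simp
    ultimately show False using e2 q2 by linarith
  qed
  show ?thesis
  proof (intro exI conjI)
    show "1 \<le> nat r" "nat r \<le> q" using r0 r1 by auto
    show "p * nat r = nat w * q + 1"
    proof -
      have "int (p * nat r) = int (nat w * q + 1)" using e2 r1 \<open>w \<ge> 0\<close> by (simp add: mult.commute)
      then show ?thesis by linarith
    qed
  qed
qed

lemma zdiv_lt_helper: "(a::int) < b * c \<Longrightarrow> 1 \<le> c \<Longrightarrow> a div c < b"
proof (rule ccontr)
  assume h: "a < b * c" "1 \<le> c" "\<not> a div c < b"
  then have "c * b \<le> c * (a div c)" by (intro mult_left_mono) auto
  moreover have "c * (a div c) + a mod c = a" by (rule mult_div_mod_eq)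
  moreover have "0 \<le> a mod c" using h by simp
  moreover have "b * c = c * b" by simp
  ultimately show False using h by linarith
qed

definition bh :: "nat \<Rightarrow> nat \<Rightarrow> nat \<Rightarrow> nat" where
  "bh q q' x = nat (((int x + 1) * int q' - 1) div int q)"

lemma bh_nonneg: "1 \<le> q' \<Longrightarrow> int (bh q q' x) = ((int x + 1) * int q' - 1) div int q"
proof -
  assume "1 \<le> q'"
  moreover have "0 \<le> int q' * int x" by simp
  moreover have "(int x + 1) * int q' = int q' * int x + int q'" by (simp add: algebra_simps)
  ultimately have "0 \<le> (int x + 1) * int q' - 1" by linarith
  then have "0 \<le> ((int x + 1) * int q' - 1) div int q" by (simp add: div_int_pos_iff)
  then show ?thesis unfolding bh_def by simp
qed

lemma bh_range:
  assumes "1 \<le> q" "1 \<le> q'" "p * q' = p' * q + 1" "x + 2 \<le> p"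
  shows "bh q q' x < p'"
proof -
  have "(int x + 1) * int q' - 1 < int p' * int q"
  proof -
    have "(int x + 1) * int q' \<le> (int p - 1) * int q'" using assms by (intro mult_right_mono) auto
    moreover have "int p * int q' = int p' * int q + 1" using assms(3) by (metis of_nat_mult of_nat_add of_nat_1)
    ultimately show ?thesis using assms by (simp add: algebra_simps)
  qed
  then have "((int x + 1) * int q' - 1) div int q < int p'"
    using assms zdiv_lt_helper by simp
  then show ?thesis using bh_nonneg[of q' q x] assms by simp
qed




lemma cadj_sym: "cadj n d x y \<longleftrightarrow> cadj n d y x"
  by (auto simp: cadj_def abs_minus_commute)

lemma bh_cadj_lt:
  assumes q: "1 \<le> q" "1 \<le> q'" and e: "p * q' = p' * q + 1" and xy: "x + 2 \<le> p" "y + 2 \<le> p" "x < y"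
    and c: "cadj p q x y"
  shows "cadj p' q' (bh q q' x) (bh q q' y)"
proof -
  have E: "int p * int q' - int p' * int q = 1"
    using e by (metis add_diff_cancel_left' of_nat_add of_nat_mult of_nat_1 add.commute)
  have c': "int q \<le> int y - int x" "int y - int x \<le> int p - int q"
    using c xy unfolding cadj_def by auto
  have m: "int q' \<le> ((int y+1)*int q' - 1) div int q - ((int x+1)*int q' - 1) div int q
     \<and> ((int y+1)*int q' - 1) div int q - ((int x+1)*int q' - 1) div int q \<le> int p' - int q'"
    using BH_map[of "int q" "int q'" "int p" "int p'" "int x" "int y"] q E xy c' by auto
  show ?thesis unfolding cadj_def using m bh_nonneg[of q' q x] bh_nonneg[of q' q y] q by auto
qed

lemma bh_cadj:
  assumes q: "1 \<le> q" "1 \<le> q'" and e: "p * q' = p' * q + 1" and xy: "x + 2 \<le> p" "y + 2 \<le> p"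
    and c: "cadj p q x y"
  shows "cadj p' q' (bh q q' x) (bh q q' y)"
proof -
  have "x \<noteq> y" using c q unfolding cadj_def by auto
  then show ?thesis
  proof (cases "x < y")
    case True then show ?thesis using bh_cadj_lt assms by blast
  next
    case False
    then have "y < x" using \<open>x \<noteq> y\<close> by simp
    then have "cadj p' q' (bh q q' y) (bh q q' x)" using bh_cadj_lt assms cadj_sym by blast
    then show ?thesis using cadj_sym by blast
  qed
qed

lemma circ_hom_cadj: "circ_hom V E n d f \<longleftrightarrow> (\<forall>v\<in>V. f v < n) \<and> (\<forall>u v. E u v \<longrightarrow> cadj n d (f u) (f v))"
  by (simp add: circ_hom_def cadj_def)

lemma rot_inj:
  fixes a b s p :: nat
  assumes "a < p" "b < p" "(a + s) mod p = (b + s) mod p"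
  shows "a = b"
proof -
  have "int ((a + s) mod p) = int ((b + s) mod p)" using assms by simp
  then have "(int a + int s) mod int p = (int b + int s) mod int p" by (simp add: of_nat_mod)
  then have "((int a + int s) mod int p - int s) mod int p = ((int b + int s) mod int p - int s) mod int p" by simp
  then have "int a mod int p = int b mod int p" by (simp add: mod_diff_left_eq)
  then show ?thesis using assms by (simp add: mod_pos_pos_trivial)
qed

lemma reduce:
  assumes G: "fin_graph V E" and h: "circ_hom V E p q f" and q: "1 \<le> q" "2 * q < p"
    and cop: "coprime p q" and c0: "c0 < p" "c0 \<notin> f ` V"
  shows "\<exists>p' q' g. 1 \<le> q' \<and> 2 * q' \<le> p' \<and> coprime p' q' \<and> p' < p \<and> p' * q < p * q'
              \<and> circ_hom V E p' q' g"
proof -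
  obtain q' p' where qq: "1 \<le> q'" "q' \<le> q" and e: "p * q' = p' * q + 1"
    using farey[OF cop q] by blast
  define s where "s = p - 1 - c0"
  define r where "r v = (f v + s) mod p" for v
  define g where "g v = bh q q' (r v)" for v
  have rle: "r v + 2 \<le> p" if "v \<in> V" for v
  proof -
    have fv: "f v < p" "f v \<noteq> c0" using h that c0 unfolding circ_hom_def by auto
    have "r v < p" unfolding r_def using q by simp
    moreover have "r v \<noteq> p - 1"
    proof
      assume "r v = p - 1"
      moreover have "(c0 + s) mod p = p - 1" unfolding s_def using c0 by simp
      ultimately have "(f v + s) mod p = (c0 + s) mod p" unfolding r_def by simp
      then show False using rot_inj[OF fv(1) c0(1)] fv by blast
    qed
    ultimately show ?thesis by linarith
  qed
  have "circ_hom V E p' q' g"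
    unfolding circ_hom_cadj
  proof (intro conjI ballI allI impI)
    fix v assume "v \<in> V"
    then show "g v < p'" unfolding g_def using bh_range[OF q(1) qq(1) e rle] by blast
  next
    fix u v assume uv: "E u v"
    then have uvV: "u \<in> V" "v \<in> V" using G unfolding fin_graph_def by auto
    have fl: "f u < p" "f v < p" using h uvV unfolding circ_hom_def by auto
    have "cadj p q (f u) (f v)" using h uv unfolding circ_hom_cadj by blast
    then have "cadj p q (r u) (r v)" unfolding r_def using cadj_rot fl q by simp
    then show "cadj p' q' (g u) (g v)" unfolding g_def using bh_cadj q(1) qq(1) e rle uvV by blast
  qed
  moreover have "p' * q < p * q'" using e by simp
  moreover have "p' < p"
  proof -
    have "p * q' \<le> p * q" using qq by simp
    then have "p' * q < p * q" using e by linarith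
    then show ?thesis by simp
  qed
  moreover have "2 * q' \<le> p'"
  proof -
    have "(2 * q + 1) * q' \<le> p * q'" using q by (intro mult_right_mono) auto
    then have "2 * q' * q + q' \<le> p' * q + 1" using e by (simp add: algebra_simps)
    then have "2 * q' * q \<le> p' * q" using qq by linarith
    then show ?thesis using q by simp
  qed
  moreover have "coprime p' q'"
  proof (rule coprimeI)
    fix c assume "c dvd p'" "c dvd q'"
    then have "c dvd p * q'" "c dvd p' * q" by auto
    then have "c dvd p * q' - p' * q" by (rule dvd_diff_nat)
    then show "is_unit c" using e by simp
  qed
  ultimately show ?thesis using qq by blast
qed



definition ratios :: "'a set \<Rightarrow> ('a \<Rightarrow> 'a \<Rightarrow> bool) \<Rightarrow> real set" where
  "ratios V E = {real n / real d | n d. 1 \<le> d \<and> 2 * d \<le> n \<and> coprime n d \<and> (\<exists>f. circ_hom V E n d f)}"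

lemma ccn_ratios: "circular_chromatic_number V E = Inf (ratios V E)"
  unfolding circular_chromatic_number_def ratios_def by simp

lemma bdd_ratios: "bdd_below (ratios V E)"
  unfolding ratios_def by (intro bdd_belowI[of _ 0]) auto

lemma in_ratios: "1 \<le> d \<Longrightarrow> 2 * d \<le> n \<Longrightarrow> coprime n d \<Longrightarrow> circ_hom V E n d f \<Longrightarrow> real n / real d \<in> ratios V E"
  unfolding ratios_def by blast

lemma ccn_le: "1 \<le> d \<Longrightarrow> 2 * d \<le> n \<Longrightarrow> coprime n d \<Longrightarrow> circ_hom V E n d f
   \<Longrightarrow> circular_chromatic_number V E \<le> real n / real d"
  unfolding ccn_ratios using in_ratios bdd_ratios by (metis cInf_lower)

lemma dominate:
  assumes G: "fin_graph V E"
  shows "circ_hom V E p q f \<Longrightarrow> 1 \<le> q \<Longrightarrow> 2 * q \<le> p \<Longrightarrow> coprime p q \<Longrightarrow>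
    \<exists>p' q' g. 1 \<le> q' \<and> 2 * q' \<le> p' \<and> coprime p' q' \<and> p' \<le> max (card V) 2 \<and> p' * q \<le> p * q'
      \<and> circ_hom V E p' q' g"
proof (induction p arbitrary: q f rule: less_induct)
  case (less p)
  show ?case
  proof (cases "p \<le> max (card V) 2")
    case True
    then show ?thesis using less.prems by blast
  next
    case False
    have "2 * q \<noteq> p"
    proof
      assume "2 * q = p"
      then have "q dvd p" by auto
      then have "is_unit q" using coprime_common_divisor[OF less.prems(4) \<open>q dvd p\<close> dvd_refl] by simp
      then have "q = 1" by simp
      then show False using False \<open>2 * q = p\<close> by simp
    qed
    then have q2: "2 * q < p" using less.prems by simp
    have fin: "finite V" using G unfolding fin_graph_def by simp
    have sub: "f ` V \<subseteq> {..<p}" using less.prems(1) unfolding circ_hom_def by auto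
    have "card (f ` V) < p" using card_image_le[OF fin, of f] False by simp
    then have "f ` V \<noteq> {..<p}" by auto
    then obtain c0 where c0: "c0 < p" "c0 \<notin> f ` V" using sub by auto
    obtain p' q' g where r: "1 \<le> q'" "2 * q' \<le> p'" "coprime p' q'" "p' < p" "p' * q < p * q'"
        "circ_hom V E p' q' g"
      using reduce[OF G less.prems(1) less.prems(2) q2 less.prems(4) c0] by blast
    obtain p'' q'' g' where r2: "1 \<le> q''" "2 * q'' \<le> p''" "coprime p'' q''" "p'' \<le> max (card V) 2"
       "p'' * q' \<le> p' * q''" "circ_hom V E p'' q'' g'"
      using less.IH[OF r(4) r(6) r(1) r(2) r(3)] by blast
    have "p'' * q * q' \<le> p * q'' * q'"
    proof -
      have "p'' * q * q' = (p'' * q') * q" by (simp add: ac_simps)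
      also have "\<dots> \<le> (p' * q'') * q" using r2(5) by (intro mult_right_mono) auto
      also have "\<dots> = (p' * q) * q''" by (simp add: ac_simps)
      also have "\<dots> \<le> (p * q') * q''" using r(5) by (intro mult_right_mono) auto
      also have "\<dots> = p * q'' * q'" by (simp add: ac_simps)
      finally show ?thesis .
    qed
    then have "p'' * q \<le> p * q''" using r(1) by simp
    then show ?thesis using r2 by blast
  qed
qed

lemma frac_eq:
  fixes n d p q :: nat
  assumes "coprime n d" "coprime p q" "0 < d" "0 < q" "n * q = p * d"
  shows "n = p \<and> d = q"
proof -
  have "d dvd n * q" using assms(5) by simp
  then have "d dvd q" using assms(1) by (metis coprime_commute coprime_dvd_mult_right_iff)
  moreover have "q dvd p * d" using assms(5) by (metis dvd_triv_right)
  then have "q dvd d" using assms(2) by (metis coprime_commute coprime_dvd_mult_right_iff)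
  ultimately have "d = q" by (simp add: dvd_antisym)
  then show ?thesis using assms by simp
qed

lemma attain:
  assumes G: "fin_graph V E" and c: "circular_chromatic_number V E = real n / real d"
    and cop: "coprime n d" and d: "1 \<le> d"
  shows "2 * d \<le> n \<and> (\<exists>f. circ_hom V E n d f)"
proof -
  define B where "B = max (card V) 2"
  define Q where "Q = {real p / real q | p q. 1 \<le> q \<and> 2 * q \<le> p \<and> coprime p q \<and> p \<le> B \<and> (\<exists>f. circ_hom V E p q f)}"
  have fin: "finite V" using G unfolding fin_graph_def by simp
  have "Q \<subseteq> (\<lambda>(p, q). real p / real q) ` ({..B} \<times> {..B})"
    unfolding Q_def by force
  then have finQ: "finite Q" by (rule finite_subset) auto
  obtain h where h: "bij_betw h V {0..<card V}" using ex_bij_betw_finite_nat[OF fin] by blast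
  have hB: "h v < B" if "v \<in> V" for v
  proof -
    have "h v \<in> {0..<card V}" using bij_betw_apply[OF h] that by simp
    then show "h v < B" unfolding B_def by simp
  qed
  have "circ_hom V E B 1 h"
    unfolding circ_hom_cadj
  proof (intro conjI ballI allI impI)
    fix v assume "v \<in> V"
    then show "h v < B" by (rule hB)
  next
    fix u v assume "E u v"
    then have uv: "u \<in> V" "v \<in> V" "u \<noteq> v" using G unfolding fin_graph_def by auto
    then have "h u \<noteq> h v" "h u < B" "h v < B" using h hB unfolding bij_betw_def inj_on_def by auto
    then show "cadj B 1 (h u) (h v)" unfolding cadj_def by auto
  qed
  then have "real B / real 1 \<in> Q" unfolding Q_def B_def by fastforce
  then have neQ: "Q \<noteq> {}" by auto
  define m where "m = Min Q"
  have mQ: "m \<in> Q" unfolding m_def using finQ neQ by simp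
  have QR: "Q \<subseteq> ratios V E" unfolding Q_def ratios_def by blast
  have "Inf (ratios V E) = m"
  proof (rule cInf_eq_minimum)
    show "m \<in> ratios V E" using mQ QR by blast
  next
    fix x assume "x \<in> ratios V E"
    then obtain p q f where pq: "x = real p / real q" "1 \<le> q" "2 * q \<le> p" "coprime p q" "circ_hom V E p q f"
      unfolding ratios_def by blast
    obtain p' q' g where r: "1 \<le> q'" "2 * q' \<le> p'" "coprime p' q'" "p' \<le> B" "p' * q \<le> p * q'"
      "circ_hom V E p' q' g" using dominate[OF G pq(5) pq(2) pq(3) pq(4)] unfolding B_def by blast
    have "real p' / real q' \<in> Q" unfolding Q_def using r by blast
    then have "m \<le> real p' / real q'" unfolding m_def using finQ by simp
    also have "\<dots> \<le> real p / real q"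
    proof -
      have "real p' * real q \<le> real p * real q'" using r(5) by (metis of_nat_le_iff of_nat_mult)
      then show ?thesis using r(1) pq(2) by (simp add: divide_simps)
    qed
    finally show "m \<le> x" using pq by simp
  qed
  then have "real n / real d \<in> Q" using c mQ unfolding ccn_ratios by simp
  then obtain p q f where pq: "real n / real d = real p / real q" "1 \<le> q" "2 * q \<le> p" "coprime p q"
     "circ_hom V E p q f" unfolding Q_def by blast
  have "real n * real q = real p * real d" using pq(1,2) d by (simp add: divide_simps)
  then have "n * q = p * d" by (metis of_nat_eq_iff of_nat_mult)
  then have "n = p \<and> d = q" using frac_eq[OF cop pq(4)] d pq(2) by simp
  then show ?thesis using pq by blast
qed



lemma shift_cadj:
  assumes xy: "x < n" "y < n" and d: "1 \<le> d" and c: "cadj n d x y" and ne: "y \<noteq> (x + d) mod n"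
  shows "cadj n d ((x + 1) mod n) y"
proof -
  have n: "0 < n" using xy by simp
  define D where "D = (int y - int x) mod int n"
  have c': "cadj n d y x" using c cadj_sym by blast
  then have D: "int d \<le> D" "D \<le> int n - int d" unfolding D_def using cadj_mod xy d by auto
  have "D \<noteq> int d"
  proof
    assume Dd: "D = int d"
    have "int y = int y mod int n" using xy by simp
    also have "\<dots> = ((int y - int x) + int x) mod int n" by simp
    also have "\<dots> = (D + int x) mod int n" unfolding D_def by (simp add: mod_add_left_eq)
    also have "\<dots> = int ((x + d) mod n)" using Dd by (simp add: of_nat_mod add.commute)
    finally show False using ne by simp
  qed
  then have D1: "int d + 1 \<le> D" using D by simp
  have "(int y - int ((x + 1) mod n)) mod int n = (int y - (int x + 1)) mod int n"
    by (simp add: of_nat_mod mod_diff_right_eq add.commute)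
  also have "\<dots> = ((int y - int x) - 1) mod int n" by (simp add: algebra_simps)
  also have "\<dots> = (D - 1) mod int n" unfolding D_def by (simp add: mod_diff_left_eq)
  also have "\<dots> = D - 1" using D1 D d by (intro mod_pos_pos_trivial) auto
  finally have e: "(int y - int ((x + 1) mod n)) mod int n = D - 1" .
  have "cadj n d y ((x + 1) mod n)" using cadj_mod[of y n "(x + 1) mod n" d] xy n d e D D1 by simp
  then show ?thesis using cadj_sym by blast
qed

lemma tight:
  assumes G: "fin_graph V E" and c: "circular_chromatic_number V E = real n / real d"
    and h: "circ_hom V E n d f" and d: "1 \<le> d" "2 * d < n" and cop: "coprime n d" and i: "i < n"
  shows "\<exists>u v. E u v \<and> f u = i \<and> f v = (i + d) mod n"
proof (rule ccontr)
  assume nt: "\<not> ?thesis"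
  define g where "g v = (if f v = i then (i + 1) mod n else f v)" for v
  have fl: "f v < n" if "v \<in> V" for v using h that unfolding circ_hom_def by auto
  have hg: "circ_hom V E n d g"
    unfolding circ_hom_cadj
  proof (intro conjI ballI allI impI)
    fix v assume "v \<in> V" then show "g v < n" using fl i unfolding g_def by auto
  next
    fix u v assume uv: "E u v"
    then have V: "u \<in> V" "v \<in> V" "E v u" using G unfolding fin_graph_def by auto
    have cuv: "cadj n d (f u) (f v)" using h uv unfolding circ_hom_cadj by blast
    show "cadj n d (g u) (g v)"
    proof (cases "f u = i")
      case True
      have "f v \<noteq> i" using cuv True d unfolding cadj_def by auto
      moreover have "f v \<noteq> (i + d) mod n" using nt uv True by blast
      ultimately show ?thesis using shift_cadj[of i n "f v" d] cuv True fl V d i unfolding g_def by simp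
    next
      case False
      show ?thesis
      proof (cases "f v = i")
        case True
        have "f u \<noteq> (i + d) mod n" using nt V True by blast
        moreover have "cadj n d (f v) (f u)" using cuv cadj_sym by blast
        ultimately have "cadj n d ((i + 1) mod n) (f u)"
          using shift_cadj[of i n "f u" d] True fl V d i by simp
        then show ?thesis using False True cadj_sym unfolding g_def by simp
      next
        case False2: False
        then show ?thesis using False cuv unfolding g_def by simp
      qed
    qed
  qed
  have "i \<notin> g ` V"
  proof
    assume "i \<in> g ` V"
    then obtain v where v: "v \<in> V" "g v = i" by blast
    show False
    proof (cases "f v = i")
      case True
      then have "(i + 1) mod n = i" using v unfolding g_def by simp
      moreover have "n \<ge> 2" using d by simp
      ultimately show False using i
      proof (cases "i + 1 < n")
        case True
        then show False using \<open>(i + 1) mod n = i\<close> by simp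
      next
        case False
        then have "i + 1 = n" using i by simp
        then show False using \<open>(i + 1) mod n = i\<close> \<open>n \<ge> 2\<close> by simp
      qed
    next
      case False
      then show False using v unfolding g_def by simp
    qed
  qed
  then obtain p' q' g' where r: "1 \<le> q'" "2 * q' \<le> p'" "coprime p' q'" "p' < n" "p' * d < n * q'"
      "circ_hom V E p' q' g'"
    using reduce[OF G hg d(1) d(2) cop i] by blast
  have "circular_chromatic_number V E \<le> real p' / real q'" using ccn_le r by blast
  moreover have "real p' / real q' < real n / real d"
  proof -
    have "real p' * real d < real n * real q'" using r(5) by (metis of_nat_less_iff of_nat_mult)
    then show ?thesis using r(1) d by (simp add: divide_simps)
  qed
  ultimately show False using c by simp
qed



lemma max_ext:
  assumes G: "fin_graph V E" and A: "independent_set V E A"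
  shows "\<exists>M. maximal_independent_set V E M \<and> A \<subseteq> M"
proof -
  define F where "F = {T. independent_set V E T \<and> A \<subseteq> T}"
  have "F \<subseteq> Pow V" unfolding F_def independent_set_def by auto
  moreover have "finite V" using G unfolding fin_graph_def by simp
  ultimately have "finite F" by (meson finite_Pow_iff finite_subset)
  moreover have "A \<in> F" using A unfolding F_def by simp
  ultimately obtain m where m: "m \<in> F" "\<forall>b\<in>F. m \<le> b \<longrightarrow> m = b"
    using finite_has_maximal[of F] by blast
  have "maximal_independent_set V E m"
    unfolding maximal_independent_set_def
  proof (intro conjI allI impI)
    show "independent_set V E m" using m unfolding F_def by simp
  next
    fix T assume "independent_set V E T \<and> m \<subseteq> T"
    then have "T \<in> F" "m \<le> T" using m unfolding F_def by auto
    then show "T = m" using m by metis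
  qed
  then show ?thesis using m unfolding F_def by blast
qed

lemma free_lemma:
  assumes G: "fin_graph V E" and S: "independent_set V E S" and uv: "E u v"
    and nu: "u \<notin> S" "v \<notin> S" and nadj: "\<forall>w\<in>S. \<not> E u w" "\<forall>w\<in>S. \<not> E v w"
  shows "free_independent_set V E S"
proof -
  have uvV: "u \<in> V" "v \<in> V" "\<not> E u u" "\<not> E v v" using G uv unfolding fin_graph_def by blast+
  have ins: "independent_set V E (insert x S)" if "x \<in> V" "\<not> E x x" "\<forall>w\<in>S. \<not> E x w" for x
  proof -
    have "\<not> E w x" if "w \<in> S" for w
      using that \<open>\<forall>w\<in>S. \<not> E x w\<close> G unfolding fin_graph_def by blast
    then show ?thesis using S that unfolding independent_set_def by auto
  qed
  obtain M1 where M1: "maximal_independent_set V E M1" "insert u S \<subseteq> M1"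
    using max_ext[OF G ins[OF uvV(1) uvV(3) nadj(1)]] by blast
  obtain M2 where M2: "maximal_independent_set V E M2" "insert v S \<subseteq> M2"
    using max_ext[OF G ins[OF uvV(2) uvV(4) nadj(2)]] by blast
  have "M1 \<noteq> M2"
  proof
    assume "M1 = M2"
    then have "u \<in> M1" "v \<in> M1" using M1 M2 by auto
    then show False using M1(1) uv unfolding maximal_independent_set_def independent_set_def by blast
  qed
  then show ?thesis unfolding free_independent_set_def using S M1 M2 by blast
qed



lemma block_free:
  assumes G: "fin_graph V E" and h: "circ_hom V E n d f" and d: "2 \<le> d" "2 * d < n"
    and tight: "\<forall>i<n. \<exists>u v. E u v \<and> f u = i \<and> f v = (i + d) mod n" and a: "a < n"
  shows "free_independent_set V E {w\<in>V. a \<le> f w \<and> f w < a + (d - 1)}"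
proof -
  define S where "S = {w\<in>V. a \<le> f w \<and> f w < a + (d - 1)}"
  have n: "0 < n" using a by simp
  have fl: "f w < n" if "w \<in> V" for w using h that unfolding circ_hom_def by auto
  define i where "i = (a + n - 1) mod n"
  have il: "i < n" unfolding i_def using n by simp
  obtain u v where uv: "E u v" "f u = i" "f v = (i + d) mod n" using tight il by blast
  have uvV: "u \<in> V" "v \<in> V" using G uv unfolding fin_graph_def by auto
  have ii: "int i = (int a - 1) mod int n"
  proof -
    have "int i = int (a + n - 1) mod int n" unfolding i_def by (simp add: of_nat_mod)
    also have "int (a + n - 1) = (int a - 1) + int n" using n by simp
    finally show ?thesis by simp
  qed
  have iv: "int (f v) = (int a - 1 + int d) mod int n"
  proof -
    have "int (f v) = (int i + int d) mod int n" using uv by (simp add: of_nat_mod)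
    also have "\<dots> = (int a - 1 + int d) mod int n" unfolding ii by (simp add: mod_add_left_eq)
    finally show ?thesis .
  qed
  have key1: "(int c - int i) mod int n = int c - int a + 1" if "a \<le> c" "c < a + (d - 1)" for c
  proof -
    have "(int c - int i) mod int n = (int c - (int a - 1)) mod int n" unfolding ii by (simp add: mod_diff_right_eq)
    also have "\<dots> = int c - int a + 1"
    proof -
      have e: "int c - (int a - 1) = int c - int a + 1" by simp
      show ?thesis unfolding e using that d by (intro mod_pos_pos_trivial) auto
    qed
    finally show ?thesis .
  qed
  have key2: "(int (f v) - int c) mod int n = int a - 1 + int d - int c" if "a \<le> c" "c < a + (d - 1)" for c
  proof -
    have "(int (f v) - int c) mod int n = (int a - 1 + int d - int c) mod int n" unfolding iv by (simp add: mod_diff_left_eq)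
    also have "\<dots> = int a - 1 + int d - int c" using that d by (intro mod_pos_pos_trivial) auto
    finally show ?thesis .
  qed
  have dpos: "0 < d" using d by simp
  have indep: "independent_set V E S"
    unfolding independent_set_def
  proof (intro conjI ballI)
    show "S \<subseteq> V" unfolding S_def by auto
  next
    fix w1 w2 assume "w1 \<in> S" "w2 \<in> S"
    then have "\<bar>int (f w1) - int (f w2)\<bar> < int d" unfolding S_def using d by auto
    then have "\<not> cadj n d (f w1) (f w2)" unfolding cadj_def by auto
    then show "\<not> E w1 w2" using h unfolding circ_hom_cadj by blast
  qed
  have nu: "\<not> E u w" if "w \<in> S" for w
  proof
    assume "E u w"
    then have "cadj n d (f w) (f u)" using h cadj_sym unfolding circ_hom_cadj by blast
    moreover have "f w < n" "a \<le> f w" "f w < a + (d - 1)" using that fl unfolding S_def by auto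
    moreover have "f w + 1 < a + d" using \<open>f w < a + (d - 1)\<close> d by linarith
    ultimately show False using cadj_mod[of "f w" n i d] key1[of "f w"] il uv dpos by simp
  qed
  have nv: "\<not> E v w" if "w \<in> S" for w
  proof
    assume "E v w"
    then have "cadj n d (f v) (f w)" using h unfolding circ_hom_cadj by blast
    moreover have "f w < n" "a \<le> f w" "f w < a + (d - 1)" using that fl unfolding S_def by auto
    ultimately show False using cadj_mod[of "f v" n "f w" d] key2[of "f w"] fl uvV dpos by simp
  qed
  have uS: "u \<notin> S"
  proof
    assume "u \<in> S"
    then have "a \<le> i" "i < a + (d - 1)" using uv unfolding S_def by auto
    then show False using key1[of i] d by (simp; linarith)
  qed
  have vS: "v \<notin> S"
  proof
    assume "v \<in> S"
    then have "a \<le> f v" "f v < a + (d - 1)" unfolding S_def by auto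
    then show False using key2[of "f v"] d by simp
  qed
  show ?thesis using free_lemma[OF G indep uv(1) uS vS] nu nv unfolding S_def by blast
qed



theorem mainTheorem2:
  fixes V :: "'a set" and E :: "'a \<Rightarrow> 'a \<Rightarrow> bool" and n d :: nat
  assumes "fin_graph V E"
    and "circular_chromatic_number V E = real n / real d"
    and "coprime n d"
    and "d \<ge> 2"
  shows "free_chromatic_number V E
           \<le> enat (nat \<lceil>circular_chromatic_number V E * (1 + 1 / (real d - 1))\<rceil>)
       \<and> \<lceil>circular_chromatic_number V E * (1 + 1 / (real d - 1))\<rceil>
           \<le> 2 * int (chromatic_number V E) - 1"
proof -
  note G = assms(1) and c = assms(2) and cop = assms(3) and d2 = assms(4)
  have d1: "1 \<le> d" using d2 by simp
  obtain f where nd0: "2 * d \<le> n" and hom: "circ_hom V E n d f" using attain[OF G c cop d1] by blast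
  have ndiv: "\<not> d dvd n"
  proof
    assume "d dvd n"
    then have "is_unit d" using coprime_common_divisor[OF cop _ dvd_refl] by blast
    then show False using d2 by simp
  qed
  have nd: "2 * d < n"
  proof -
    have "2 * d \<noteq> n" using ndiv by auto
    then show ?thesis using nd0 by simp
  qed
  have T: "\<forall>i<n. \<exists>u v. E u v \<and> f u = i \<and> f v = (i + d) mod n"
    using tight[OF G c hom d1 nd cop] by blast
  have fl: "f v < n" if "v \<in> V" for v using hom that unfolding circ_hom_def by auto
  obtain u0 v0 where e0: "E u0 v0" using T nd by blast
  have u0V: "u0 \<in> V" "v0 \<in> V" using G e0 unfolding fin_graph_def by auto
  have finV: "finite V" using G unfolding fin_graph_def by simp
  define k where "k = d - 1"
  have k1: "1 \<le> k" unfolding k_def using d2 by simp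
  have rk: "real k = real d - 1" unfolding k_def using d1 by (simp add: of_nat_diff)
  define K where "K = nat \<lceil>real n / real k\<rceil>"
  have eq: "circular_chromatic_number V E * (1 + 1 / (real d - 1)) = real n / real k"
    unfolding c rk using d2 by (simp add: field_simps)
  define blk where "blk j = {w\<in>V. f w div k = j}" for j
  have blk_eq: "blk j = {w\<in>V. j * k \<le> f w \<and> f w < j * k + (d - 1)}" for j
  proof -
    have "(x div k = j) = (j * k \<le> x \<and> x < j * k + k)" for x
    proof
      assume "x div k = j"
      then have "j * k + x mod k = x" using div_mult_mod_eq[of x k] by metis
      moreover have "x mod k < k" using k1 by simp
      ultimately show "j * k \<le> x \<and> x < j * k + k" by linarith
    next
      assume h: "j * k \<le> x \<and> x < j * k + k"
      then have "x div k < Suc j" using less_mult_imp_div_less[of x "Suc j" k] by simp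
      moreover have "(j * k) div k \<le> x div k" using h by (intro div_le_mono) auto
      then have "j \<le> x div k" using k1 by simp
      ultimately show "x div k = j" by simp
    qed
    then show ?thesis unfolding blk_def k_def by auto
  qed
  define P where "P = (\<lambda>v. blk (f v div k)) ` V"
  have part: "partition_on V P"
  proof (rule partition_onI)
    show "\<Union>P = V" unfolding P_def blk_def by auto
  next
    fix p q assume "p \<in> P" "q \<in> P" "p \<noteq> q"
    then show "disjnt p q" unfolding P_def blk_def disjnt_def by auto
  next
    show "{} \<notin> P" unfolding P_def blk_def by auto
  qed
  have finP: "finite P" unfolding P_def using finV by simp
  have "P \<noteq> {}" using u0V unfolding P_def by blast
  then have cardP: "0 < card P" using finP by (simp add: card_gt_0_iff)
  have freeP: "\<forall>S\<in>P. free_independent_set V E S"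
  proof
    fix S assume "S \<in> P"
    then obtain v where v: "v \<in> V" "S = blk (f v div k)" unfolding P_def by blast
    have "f v div k * k \<le> f v" by simp
    then have "f v div k * k < n" using fl[OF v(1)] by linarith
    then show "free_independent_set V E S"
      using block_free[OF G hom d2 nd T] v blk_eq by simp
  qed
  have le1: "free_chromatic_number V E \<le> enat (card P)"
    unfolding free_chromatic_number_def using part finP cardP freeP
    by (intro Inf_lower) blast
  have "card P \<le> K"
  proof -
    have "P = blk ` ((\<lambda>v. f v div k) ` V)" unfolding P_def by (simp add: image_image)
    then have "card P \<le> card ((\<lambda>v. f v div k) ` V)" using finV by (simp add: card_image_le)
    moreover have "(\<lambda>v. f v div k) ` V \<subseteq> {..<K}"
    proof
      fix j assume "j \<in> (\<lambda>v. f v div k) ` V"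
      then obtain v where v: "v \<in> V" "j = f v div k" by blast
      have "real n / real k \<le> real K" unfolding K_def by linarith
      then have "real n \<le> real K * real k" using k1 by (simp add: divide_simps)
      then have "n \<le> K * k" by (metis of_nat_le_iff of_nat_mult)
      then have "f v < K * k" using fl[OF v(1)] by linarith
      then show "j \<in> {..<K}" using v less_mult_imp_div_less by simp
    qed
    then have "card ((\<lambda>v. f v div k) ` V) \<le> K" using card_mono[of "{..<K}"] by fastforce
    ultimately show ?thesis by simp
  qed
  then have part1: "free_chromatic_number V E
           \<le> enat (nat \<lceil>circular_chromatic_number V E * (1 + 1 / (real d - 1))\<rceil>)"
    using le1 unfolding eq K_def by (meson enat_ord_simps(1) order_trans)
  define \<chi> where "\<chi> = chromatic_number V E"
  have "\<exists>c. proper_coloring V E n c"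
  proof
    show "proper_coloring V E n f"
      unfolding proper_coloring_def
    proof (intro conjI ballI allI impI)
      fix v assume "v \<in> V" then show "f v < n" by (rule fl)
    next
      fix u v assume "E u v"
      then have "cadj n d (f u) (f v)" using hom unfolding circ_hom_cadj by blast
      then show "f u \<noteq> f v" unfolding cadj_def using d1 by auto
    qed
  qed
  then have "\<exists>c. proper_coloring V E (LEAST k. \<exists>c. proper_coloring V E k c) c"
    by (rule LeastI[of "\<lambda>k. \<exists>c. proper_coloring V E k c" n])
  then obtain c0 where c0: "proper_coloring V E \<chi> c0"
    unfolding \<chi>_def chromatic_number_def by blast
  have c0l: "c0 v < \<chi>" if "v \<in> V" for v using c0 that unfolding proper_coloring_def by auto
  have chi2: "2 \<le> \<chi>"
  proof -
    have "c0 u0 \<noteq> c0 v0" using c0 e0 unfolding proper_coloring_def by auto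
    then show ?thesis using c0l[OF u0V(1)] c0l[OF u0V(2)] by linarith
  qed
  have "circ_hom V E \<chi> 1 c0"
    unfolding circ_hom_cadj
  proof (intro conjI ballI allI impI)
    fix v assume "v \<in> V" then show "c0 v < \<chi>" by (rule c0l)
  next
    fix u v assume uv: "E u v"
    then have "u \<in> V" "v \<in> V" using G unfolding fin_graph_def by auto
    then have "c0 u < \<chi>" "c0 v < \<chi>" "c0 u \<noteq> c0 v" using c0l c0 uv unfolding proper_coloring_def by auto
    then show "cadj \<chi> 1 (c0 u) (c0 v)" unfolding cadj_def by auto
  qed
  then have "circular_chromatic_number V E \<le> real \<chi> / real (1::nat)"
    using ccn_le[of 1 \<chi>] chi2 by simp
  then have "real n / real d \<le> real \<chi>" using c by simp
  then have "real n \<le> real \<chi> * real d" using d1 by (simp add: divide_simps)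
  then have "real n \<le> real d * real \<chi>" by (simp only: mult.commute)
  then have "n \<le> d * \<chi>" by (metis of_nat_le_iff of_nat_mult)
  moreover have "n \<noteq> d * \<chi>" using ndiv by auto
  ultimately have "n + 1 \<le> d * \<chi>" by simp
  then have "int (n + 1) \<le> int (d * \<chi>)" by (simp only: of_nat_le_iff)
  then have n1: "int n + 1 \<le> int d * int \<chi>" by simp
  have A: "0 \<le> (int \<chi> - 1) * (int d - 2)" using chi2 d2 by simp
  have ik: "int k = int d - 1" unfolding k_def using d1 by simp
  have id: "(2 * int \<chi> - 1) * (int d - 1) = int d * int \<chi> - 1 + (int \<chi> - 1) * (int d - 2)"
    by (simp add: algebra_simps)
  have "int n \<le> (2 * int \<chi> - 1) * int k"
    unfolding ik id using n1 A by linarith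
  then have "real n \<le> real_of_int (2 * int \<chi> - 1) * real k" by (metis of_int_le_iff of_int_mult of_int_of_nat_eq)
  then have "real n / real k \<le> real_of_int (2 * int \<chi> - 1)" using k1 by (simp add: divide_simps)
  then have part2: "\<lceil>circular_chromatic_number V E * (1 + 1 / (real d - 1))\<rceil> \<le> 2 * int \<chi> - 1"
    unfolding eq by (rule ceiling_le)
  show ?thesis using part1 part2 unfolding \<chi>_def by blast
qed

end
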